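(* Let $(X,\rho)$ and $(\tilde X,\tilde\rho)$ be symmetric racks (respectively, symmetric quandles) and let $f:(\tilde X,\tilde\rho)\to(X,\rho)$ be a surjective symmetric rack (respectively, quandle) homomorphism. Let $S=\{S_x\mid x\in X\}$ be a family of sets such that for each $x\in X$ there is a bijection $\mu_x:f^{-1}(x)\to S_x$. Then there is a dynamical cocycle $(\alpha,\beta)$ of $(X,\rho)$ over $S$ such that $(\tilde X,\tilde\rho)$ is isomorphic (as a symmetric rack, respectively quandle) to $\big(X\times_{(\alpha,\beta)}S,\rho_{\alpha,\beta}\big)$.
   Context: A rack is a set $X$ with binary operation $*$ such that each $x\mapsto x*y$ is bijective (inverse $x\mapsto x*^{-1}y$) and $(x*y)*z=(x*z)*(y*z)$; a quandle also satisfies $x*x=x$. A good involution is $\rho:X\to X$ with $\rho^2=\mathrm{id}$, $\rho(x*y)=\rho(x)*y$, $x*\rho(y)=x*^{-1}y$; $(X,\rho)$ is a symmetric rack (quandle). A symmetric rack (quandle) homomorphism $f$ satisfies $f(x*y)=f(x)*f(y)$ and $f\rho=\rho' f$; an isomorphism is a bijective one. A dynamical cocycle of $(X,\rho)$ over $S=\{S_x\}$ consists of maps $\alpha_{x,y}:S_x\times S_y\to S_{x*y}$ and $\beta_x:S_x\to S_{\rho(x)}$ such that for all $x,y,z\in X$, $s\in S_x,t\in S_y,w\in S_z$ (with $\alpha_{x,y}(t)(s):=\alpha_{x,y}(s,t)$): (1) $\alpha_{x,y}(t):S_x\to S_{x*y}$ is bijective; (2) $\alpha_{x*y,z}(\alpha_{x,y}(s,t),w)=\alpha_{x*z,y*z}(\alpha_{x,z}(s,w),\alpha_{y,z}(t,w))$;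 (3) $\alpha_{\rho(x),y}(\beta_x(s),t)=\beta_{x*y}(\alpha_{x,y}(s,t))$; (4) $\beta_{\rho(x)}\beta_x(s)=s$; (5) $\alpha_{x,\rho(y)}(\beta_y(t))(s)=(\alpha_{x*^{-1}y,y}(t))^{-1}(s)$; for symmetric quandles also (6) $\alpha_{x,x}(s,s)=s$. The extension $\big(X\times_{(\alpha,\beta)}S,\rho_{\alpha,\beta}\big)$ is the set $\{(x,s)\mid x\in X,s\in S_x\}$ with $(x,s)*(y,t)=(x*y,\alpha_{x,y}(s,t))$ and $\rho_{\alpha,\beta}(x,s)=(\rho(x),\beta_x(s))$, which is a symmetric rack (quandle). *)

theory Defs
  imports Main
begin

definition rack :: "'a set \<Rightarrow> ('a \<Rightarrow> 'a \<Rightarrow> 'a) \<Rightarrow> bool" where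
  "rack X op \<longleftrightarrow>
     (\<forall>x\<in>X. \<forall>y\<in>X. op x y \<in> X) \<and>
     (\<forall>y\<in>X. bij_betw (\<lambda>x. op x y) X X) \<and>
     (\<forall>x\<in>X. \<forall>y\<in>X. \<forall>z\<in>X. op (op x y) z = op (op x z) (op y z))"

definition quandle :: "'a set \<Rightarrow> ('a \<Rightarrow> 'a \<Rightarrow> 'a) \<Rightarrow> bool" where
  "quandle X op \<longleftrightarrow> rack X op \<and> (\<forall>x\<in>X. op x x = x)"

definition rinv :: "'a set \<Rightarrow> ('a \<Rightarrow> 'a \<Rightarrow> 'a) \<Rightarrow> 'a \<Rightarrow> 'a \<Rightarrow> 'a" where
  "rinv X op x y = the_inv_into X (\<lambda>z. op z y) x"

definition good_involution :: "'a set \<Rightarrow> ('a \<Rightarrow> 'a \<Rightarrow> 'a) \<Rightarrow> ('a \<Rightarrow> 'a) \<Rightarrow> bool" where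
  "good_involution X op \<rho> \<longleftrightarrow>
     (\<forall>x\<in>X. \<rho> x \<in> X) \<and>
     (\<forall>x\<in>X. \<rho> (\<rho> x) = x) \<and>
     (\<forall>x\<in>X. \<forall>y\<in>X. \<rho> (op x y) = op (\<rho> x) y) \<and>
     (\<forall>x\<in>X. \<forall>y\<in>X. op x (\<rho> y) = rinv X op x y)"

definition symmetric_rack :: "'a set \<Rightarrow> ('a \<Rightarrow> 'a \<Rightarrow> 'a) \<Rightarrow> ('a \<Rightarrow> 'a) \<Rightarrow> bool" where
  "symmetric_rack X op \<rho> \<longleftrightarrow> rack X op \<and> good_involution X op \<rho>"

definition symmetric_quandle :: "'a set \<Rightarrow> ('a \<Rightarrow> 'a \<Rightarrow> 'a) \<Rightarrow> ('a \<Rightarrow> 'a) \<Rightarrow> bool" where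
  "symmetric_quandle X op \<rho> \<longleftrightarrow> quandle X op \<and> good_involution X op \<rho>"

definition symmetric_hom ::
  "'b set \<Rightarrow> ('b \<Rightarrow> 'b \<Rightarrow> 'b) \<Rightarrow> ('b \<Rightarrow> 'b) \<Rightarrow>
   'a set \<Rightarrow> ('a \<Rightarrow> 'a \<Rightarrow> 'a) \<Rightarrow> ('a \<Rightarrow> 'a) \<Rightarrow> ('b \<Rightarrow> 'a) \<Rightarrow> bool" where
  "symmetric_hom Y opY \<rho>Y X opX \<rho>X f \<longleftrightarrow>
     (\<forall>a\<in>Y. f a \<in> X) \<and>
     (\<forall>a\<in>Y. \<forall>b\<in>Y. f (opY a b) = opX (f a) (f b)) \<and>
     (\<forall>a\<in>Y. f (\<rho>Y a) = \<rho>X (f a))"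

definition symmetric_iso ::
  "'b set \<Rightarrow> ('b \<Rightarrow> 'b \<Rightarrow> 'b) \<Rightarrow> ('b \<Rightarrow> 'b) \<Rightarrow>
   'a set \<Rightarrow> ('a \<Rightarrow> 'a \<Rightarrow> 'a) \<Rightarrow> ('a \<Rightarrow> 'a) \<Rightarrow> ('b \<Rightarrow> 'a) \<Rightarrow> bool" where
  "symmetric_iso Y opY \<rho>Y X opX \<rho>X f \<longleftrightarrow>
     symmetric_hom Y opY \<rho>Y X opX \<rho>X f \<and> bij_betw f Y X"

text \<open>Dynamical cocycle (\<alpha>,\<beta>) of (X,\<rho>) over S; \<alpha> x y s t = \<alpha>_{x,y}(s,t), \<beta> x s = \<beta>_x(s).
  The flag q selects the quandle version (adding condition (6)).\<close>
definition dynamical_cocycle ::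
  "bool \<Rightarrow> 'a set \<Rightarrow> ('a \<Rightarrow> 'a \<Rightarrow> 'a) \<Rightarrow> ('a \<Rightarrow> 'a) \<Rightarrow> ('a \<Rightarrow> 's set) \<Rightarrow>
   ('a \<Rightarrow> 'a \<Rightarrow> 's \<Rightarrow> 's \<Rightarrow> 's) \<Rightarrow> ('a \<Rightarrow> 's \<Rightarrow> 's) \<Rightarrow> bool" where
  "dynamical_cocycle q X op \<rho> S \<alpha> \<beta> \<longleftrightarrow>
     (\<forall>x\<in>X. \<forall>s\<in>S x. \<beta> x s \<in> S (\<rho> x)) \<and>
     (\<forall>x\<in>X. \<forall>y\<in>X. \<forall>t\<in>S y. bij_betw (\<lambda>s. \<alpha> x y s t) (S x) (S (op x y))) \<and>
     (\<forall>x\<in>X. \<forall>y\<in>X. \<forall>z\<in>X. \<forall>s\<in>S x. \<forall>t\<in>S y. \<forall>w\<in>S z.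
        \<alpha> (op x y) z (\<alpha> x y s t) w = \<alpha> (op x z) (op y z) (\<alpha> x z s w) (\<alpha> y z t w)) \<and>
     (\<forall>x\<in>X. \<forall>y\<in>X. \<forall>s\<in>S x. \<forall>t\<in>S y.
        \<alpha> (\<rho> x) y (\<beta> x s) t = \<beta> (op x y) (\<alpha> x y s t)) \<and>
     (\<forall>x\<in>X. \<forall>s\<in>S x. \<beta> (\<rho> x) (\<beta> x s) = s) \<and>
     (\<forall>x\<in>X. \<forall>y\<in>X. \<forall>s\<in>S x. \<forall>t\<in>S y.
        \<alpha> x (\<rho> y) s (\<beta> y t) =
          the_inv_into (S (rinv X op x y)) (\<lambda>u. \<alpha> (rinv X op x y) y u t) s) \<and>
     (q \<longrightarrow> (\<forall>x\<in>X. \<forall>s\<in>S x. \<alpha> x x s s = s))"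

definition ext_set :: "'a set \<Rightarrow> ('a \<Rightarrow> 's set) \<Rightarrow> ('a \<times> 's) set" where
  "ext_set X S = {(x, s). x \<in> X \<and> s \<in> S x}"

definition ext_op :: "('a \<Rightarrow> 'a \<Rightarrow> 'a) \<Rightarrow> ('a \<Rightarrow> 'a \<Rightarrow> 's \<Rightarrow> 's \<Rightarrow> 's) \<Rightarrow>
    ('a \<times> 's) \<Rightarrow> ('a \<times> 's) \<Rightarrow> ('a \<times> 's)" where
  "ext_op op \<alpha> p r = (op (fst p) (fst r), \<alpha> (fst p) (fst r) (snd p) (snd r))"

definition ext_rho :: "('a \<Rightarrow> 'a) \<Rightarrow> ('a \<Rightarrow> 's \<Rightarrow> 's) \<Rightarrow> ('a \<times> 's) \<Rightarrow> ('a \<times> 's)" where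
  "ext_rho \<rho> \<beta> p = (\<rho> (fst p), \<beta> (fst p) (snd p))"

end

theory Submission
  imports Defs
begin

lemma rinv_props:
  assumes "rack X op" "x \<in> X" "y \<in> X"
  shows "rinv X op x y \<in> X" "op (rinv X op x y) y = x"
proof -
  have b: "bij_betw (\<lambda>z. op z y) X X" using assms unfolding rack_def by blast
  show "rinv X op x y \<in> X" unfolding rinv_def
    using b assms(2) by (metis bij_betw_def the_inv_into_into order_refl)
  show "op (rinv X op x y) y = x" unfolding rinv_def
    using b assms(2) f_the_inv_into_f_bij_betw by metis
qed

theorem proposition5p1:
  fixes q :: bool
    and X :: "'a set" and op :: "'a \<Rightarrow> 'a \<Rightarrow> 'a" and \<rho> :: "'a \<Rightarrow> 'a"
    and Y :: "'b set" and opY :: "'b \<Rightarrow> 'b \<Rightarrow> 'b" and \<rho>Y :: "'b \<Rightarrow> 'b"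
    and f :: "'b \<Rightarrow> 'a" and S :: "'a \<Rightarrow> 's set"
  assumes symX: "if q then symmetric_quandle X op \<rho> else symmetric_rack X op \<rho>"
    and symY: "if q then symmetric_quandle Y opY \<rho>Y else symmetric_rack Y opY \<rho>Y"
    and hom: "symmetric_hom Y opY \<rho>Y X op \<rho> f"
    and surj: "f ` Y = X"
    and fib: "\<forall>x\<in>X. \<exists>\<mu>. bij_betw \<mu> {y \<in> Y. f y = x} (S x)"
  shows "\<exists>\<alpha> \<beta> g. dynamical_cocycle q X op \<rho> S \<alpha> \<beta> \<and>
           symmetric_iso Y opY \<rho>Y (ext_set X S) (ext_op op \<alpha>) (ext_rho \<rho> \<beta>) g"
proof -
  have rX: "rack X op" and gX: "good_involution X op \<rho>"
    and qX: "q \<longrightarrow> (\<forall>x\<in>X. op x x = x)"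
    using symX by (auto simp: symmetric_quandle_def symmetric_rack_def quandle_def split: if_splits)
  have rY: "rack Y opY" and gY: "good_involution Y opY \<rho>Y"
    and qY: "q \<longrightarrow> (\<forall>x\<in>Y. opY x x = x)"
    using symY by (auto simp: symmetric_quandle_def symmetric_rack_def quandle_def split: if_splits)
  have cX: "\<And>x y. x \<in> X \<Longrightarrow> y \<in> X \<Longrightarrow> op x y \<in> X"
    and bX: "\<And>y. y \<in> X \<Longrightarrow> bij_betw (\<lambda>x. op x y) X X"
    and dX: "\<And>x y z. x \<in> X \<Longrightarrow> y \<in> X \<Longrightarrow> z \<in> X \<Longrightarrow> op (op x y) z = op (op x z) (op y z)"
    using rX unfolding rack_def by blast+
  have cY: "\<And>x y. x \<in> Y \<Longrightarrow> y \<in> Y \<Longrightarrow> opY x y \<in> Y"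
    and bY: "\<And>y. y \<in> Y \<Longrightarrow> bij_betw (\<lambda>x. opY x y) Y Y"
    and dY: "\<And>x y z. x \<in> Y \<Longrightarrow> y \<in> Y \<Longrightarrow> z \<in> Y \<Longrightarrow> opY (opY x y) z = opY (opY x z) (opY y z)"
    using rY unfolding rack_def by blast+
  have rhoX: "\<And>x. x \<in> X \<Longrightarrow> \<rho> x \<in> X" "\<And>x. x \<in> X \<Longrightarrow> \<rho> (\<rho> x) = x"
    "\<And>x y. x \<in> X \<Longrightarrow> y \<in> X \<Longrightarrow> \<rho> (op x y) = op (\<rho> x) y"
    "\<And>x y. x \<in> X \<Longrightarrow> y \<in> X \<Longrightarrow> op x (\<rho> y) = rinv X op x y"
    using gX unfolding good_involution_def by blast+
  have rhoY: "\<And>x. x \<in> Y \<Longrightarrow> \<rho>Y x \<in> Y" "\<And>x. x \<in> Y \<Longrightarrow> \<rho>Y (\<rho>Y x) = x"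
    "\<And>x y. x \<in> Y \<Longrightarrow> y \<in> Y \<Longrightarrow> \<rho>Y (opY x y) = opY (\<rho>Y x) y"
    "\<And>x y. x \<in> Y \<Longrightarrow> y \<in> Y \<Longrightarrow> opY x (\<rho>Y y) = rinv Y opY x y"
    using gY unfolding good_involution_def by blast+
  have fY: "\<And>a. a \<in> Y \<Longrightarrow> f a \<in> X"
    and fop: "\<And>a b. a \<in> Y \<Longrightarrow> b \<in> Y \<Longrightarrow> f (opY a b) = op (f a) (f b)"
    and frho: "\<And>a. a \<in> Y \<Longrightarrow> f (\<rho>Y a) = \<rho> (f a)"
    using hom unfolding symmetric_hom_def by blast+
  from bchoice[OF fib] obtain \<mu> where mu: "\<And>x. x \<in> X \<Longrightarrow> bij_betw (\<mu> x) {y \<in> Y. f y = x} (S x)"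
    by blast
  define \<nu> where "\<nu> x = the_inv_into {y \<in> Y. f y = x} (\<mu> x)" for x
  have nubij: "bij_betw (\<nu> x) (S x) {y \<in> Y. f y = x}" if "x \<in> X" for x
    unfolding \<nu>_def using mu[OF that] by (rule bij_betw_the_inv_into)
  have nuY: "\<nu> x s \<in> Y" "f (\<nu> x s) = x" "\<mu> x (\<nu> x s) = s" if "x \<in> X" "s \<in> S x" for x s
  proof -
    have "\<nu> x s \<in> {y \<in> Y. f y = x}" using bij_betwE[OF nubij[OF that(1)]] that(2) by blast
    then show "\<nu> x s \<in> Y" "f (\<nu> x s) = x" by auto
    show "\<mu> x (\<nu> x s) = s" unfolding \<nu>_def
      by (rule f_the_inv_into_f_bij_betw[OF mu[OF that(1)] that(2)])
  qed
  have muS: "\<mu> (f a) a \<in> S (f a)" if "a \<in> Y" for a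
  proof -
    have "a \<in> {y \<in> Y. f y = f a}" using that by simp
    then show ?thesis using bij_betwE[OF mu[OF fY[OF that]]] by blast
  qed
  have numu: "\<nu> (f a) (\<mu> (f a) a) = a" if "a \<in> Y" for a
  proof -
    have "inj_on (\<mu> (f a)) {y \<in> Y. f y = f a}" using mu[OF fY[OF that]] by (simp add: bij_betw_def)
    moreover have "a \<in> {y \<in> Y. f y = f a}" using that by simp
    ultimately show ?thesis unfolding \<nu>_def by (rule the_inv_into_f_f)
  qed
  have muinj: "a = b" if "a \<in> Y" "b \<in> Y" "f a = f b" "\<mu> (f a) a = \<mu> (f b) b" for a b
  proof -
    have "a = \<nu> (f a) (\<mu> (f a) a)" using numu[OF that(1)] by simp
    also have "\<dots> = \<nu> (f b) (\<mu> (f b) b)" using that(3,4) by simp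
    also have "\<dots> = b" using numu[OF that(2)] .
    finally show ?thesis .
  qed
  define \<alpha> where "\<alpha> x y s t = \<mu> (op x y) (opY (\<nu> x s) (\<nu> y t))" for x y s t
  define \<beta> where "\<beta> x s = \<mu> (\<rho> x) (\<rho>Y (\<nu> x s))" for x s
  define g where "g a = (f a, \<mu> (f a) a)" for a
  have fibbij: "bij_betw (\<lambda>a. opY a b) {a \<in> Y. f a = x} {c \<in> Y. f c = op x (f b)}"
    if hx: "x \<in> X" and hb: "b \<in> Y" for x b
  proof -
    have inj: "inj_on (\<lambda>a. opY a b) {a \<in> Y. f a = x}"
      using bY[OF hb] by (auto simp: bij_betw_def inj_on_def)
    have "(\<lambda>a. opY a b) ` {a \<in> Y. f a = x} = {c \<in> Y. f c = op x (f b)}"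
    proof
      show "(\<lambda>a. opY a b) ` {a \<in> Y. f a = x} \<subseteq> {c \<in> Y. f c = op x (f b)}"
        using cY fop hx hb by auto
      show "{c \<in> Y. f c = op x (f b)} \<subseteq> (\<lambda>a. opY a b) ` {a \<in> Y. f a = x}"
      proof
        fix c assume c: "c \<in> {c \<in> Y. f c = op x (f b)}"
        then obtain a where a: "a \<in> Y" "opY a b = c"
          using bY[OF hb] c unfolding bij_betw_def by (metis (no_types, lifting) imageE mem_Collect_eq)
        have "op (f a) (f b) = op x (f b)" using a c fop hx hb by auto
        moreover have "inj_on (\<lambda>z. op z (f b)) X" using bX[OF fY[OF hb]] by (simp add: bij_betw_def)
        ultimately have "f a = x" using fY[OF a(1)] hx by (auto simp: inj_on_def)
        then show "c \<in> (\<lambda>a. opY a b) ` {a \<in> Y. f a = x}" using a by auto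
      qed
    qed
    then show ?thesis using inj by (simp add: bij_betw_def)
  qed
  have abij: "bij_betw (\<lambda>s. \<alpha> x y s t) (S x) (S (op x y))"
    if "x \<in> X" "y \<in> X" "t \<in> S y" for x y t
  proof -
    have "bij_betw ((\<mu> (op x y)) \<circ> (\<lambda>a. opY a (\<nu> y t)) \<circ> \<nu> x) (S x) (S (op x y))"
      apply (rule bij_betw_trans[OF nubij[OF that(1)]])
      apply (rule bij_betw_trans)
      using fibbij[OF that(1) nuY(1)[OF that(2,3)]] nuY(2)[OF that(2,3)] apply simp
      using mu[OF cX[OF that(1,2)]] by simp
    then show ?thesis by (simp add: \<alpha>_def comp_def)
  qed
  have coc: "dynamical_cocycle q X op \<rho> S \<alpha> \<beta>"
    unfolding dynamical_cocycle_def
  proof (intro conjI ballI impI)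
    fix x s assume x: "x \<in> X" and s: "s \<in> S x"
    show "\<beta> x s \<in> S (\<rho> x)" unfolding \<beta>_def
      using muS[OF rhoY(1)[OF nuY(1)[OF x s]]] frho[OF nuY(1)[OF x s]] nuY(2)[OF x s] by simp
    show "\<beta> (\<rho> x) (\<beta> x s) = s" unfolding \<beta>_def
      using muS[OF rhoY(1)[OF nuY(1)[OF x s]]] frho[OF nuY(1)[OF x s]] nuY[OF x s]
        numu[OF rhoY(1)[OF nuY(1)[OF x s]]] rhoY(2) rhoX(2)[OF x] by simp
  next
    fix x y t assume "x \<in> X" "y \<in> X" "t \<in> S y"
    then show "bij_betw (\<lambda>s. \<alpha> x y s t) (S x) (S (op x y))" by (rule abij)
  next
    fix x y z s t w assume x: "x \<in> X" and y: "y \<in> X" and z: "z \<in> X" and s: "s \<in> S x"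
      and t: "t \<in> S y" and w: "w \<in> S z"
    note a = nuY[OF x s] and b = nuY[OF y t] and c = nuY[OF z w]
    have e1: "\<nu> (op x y) (\<alpha> x y s t) = opY (\<nu> x s) (\<nu> y t)"
      unfolding \<alpha>_def using numu[OF cY[OF a(1) b(1)]] fop a b by simp
    have e2: "\<nu> (op x z) (\<alpha> x z s w) = opY (\<nu> x s) (\<nu> z w)"
      unfolding \<alpha>_def using numu[OF cY[OF a(1) c(1)]] fop a c by simp
    have e3: "\<nu> (op y z) (\<alpha> y z t w) = opY (\<nu> y t) (\<nu> z w)"
      unfolding \<alpha>_def using numu[OF cY[OF b(1) c(1)]] fop b c by simp
    show "\<alpha> (op x y) z (\<alpha> x y s t) w = \<alpha> (op x z) (op y z) (\<alpha> x z s w) (\<alpha> y z t w)"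
      using e1 e2 e3 dX[OF x y z] dY[OF a(1) b(1) c(1)]
      by (simp add: \<alpha>_def[of "op x y" z] \<alpha>_def[of "op x z" "op y z"])
  next
    fix x y s t assume x: "x \<in> X" and y: "y \<in> X" and s: "s \<in> S x" and t: "t \<in> S y"
    note a = nuY[OF x s] and b = nuY[OF y t]
    have e1: "\<nu> (\<rho> x) (\<beta> x s) = \<rho>Y (\<nu> x s)"
      unfolding \<beta>_def using numu[OF rhoY(1)[OF a(1)]] frho a by simp
    have e2: "\<nu> (op x y) (\<alpha> x y s t) = opY (\<nu> x s) (\<nu> y t)"
      unfolding \<alpha>_def using numu[OF cY[OF a(1) b(1)]] fop a b by simp
    show "\<alpha> (\<rho> x) y (\<beta> x s) t = \<beta> (op x y) (\<alpha> x y s t)"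
      using e1 e2 rhoX(3)[OF x y] rhoY(3)[OF a(1) b(1)]
      by (simp add: \<alpha>_def[of "\<rho> x" y] \<beta>_def[of "op x y"])
    define x' where "x' = rinv X op x y"
    have x': "x' \<in> X" "op x' y = x" unfolding x'_def using rinv_props[OF rX x y] by auto
    define r where "r = rinv Y opY (\<nu> x s) (\<nu> y t)"
    have r: "r \<in> Y" "opY r (\<nu> y t) = \<nu> x s" unfolding r_def using rinv_props[OF rY a(1) b(1)] by auto
    have fr: "f r = x'"
    proof -
      have "op (f r) y = op x' y" using fop[OF r(1) b(1)] r(2) a b x' by simp
      moreover have "inj_on (\<lambda>z. op z y) X" using bX[OF y] by (simp add: bij_betw_def)
      ultimately show ?thesis using fY[OF r(1)] x'(1) by (auto simp: inj_on_def)
    qed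
    have lhs: "\<alpha> x (\<rho> y) s (\<beta> y t) = \<mu> x' r"
    proof -
      have e: "\<nu> (\<rho> y) (\<beta> y t) = \<rho>Y (\<nu> y t)"
        unfolding \<beta>_def using numu[OF rhoY(1)[OF b(1)]] frho b by simp
      show ?thesis unfolding \<alpha>_def e using rhoX(4)[OF x y] rhoY(4)[OF a(1) b(1)] x'_def r_def by simp
    qed
    have "the_inv_into (S x') (\<lambda>u. \<alpha> x' y u t) s = \<mu> x' r"
    proof (rule the_inv_into_f_eq)
      show "inj_on (\<lambda>u. \<alpha> x' y u t) (S x')" using abij[OF x'(1) y t] by (simp add: bij_betw_def)
      show "\<mu> x' r \<in> S x'" using muS[OF r(1)] fr by simp
      show "\<alpha> x' y (\<mu> x' r) t = s" unfolding \<alpha>_def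
        using numu[OF r(1)] fr r x' a by simp
    qed
    then show "\<alpha> x (\<rho> y) s (\<beta> y t) =
          the_inv_into (S (rinv X op x y)) (\<lambda>u. \<alpha> (rinv X op x y) y u t) s"
      using lhs x'_def by simp
  next
    fix x s assume q and x: "x \<in> X" and s: "s \<in> S x"
    show "\<alpha> x x s s = s" unfolding \<alpha>_def using qX qY \<open>q\<close> nuY[OF x s] cX x by simp
  qed
  have iso: "symmetric_iso Y opY \<rho>Y (ext_set X S) (ext_op op \<alpha>) (ext_rho \<rho> \<beta>) g"
    unfolding symmetric_iso_def symmetric_hom_def
  proof (intro conjI ballI)
    fix a assume a: "a \<in> Y"
    show "g a \<in> ext_set X S" unfolding g_def ext_set_def using fY[OF a] muS[OF a] by simp
    show "g (\<rho>Y a) = ext_rho \<rho> \<beta> (g a)"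
      unfolding g_def ext_rho_def \<beta>_def using numu[OF a] frho[OF a] by simp
  next
    fix a b assume a: "a \<in> Y" and b: "b \<in> Y"
    show "g (opY a b) = ext_op op \<alpha> (g a) (g b)"
      unfolding g_def ext_op_def \<alpha>_def using numu[OF a] numu[OF b] fop[OF a b] by simp
  next
    show "bij_betw g Y (ext_set X S)"
      unfolding bij_betw_def
    proof
      show "inj_on g Y" unfolding inj_on_def g_def using muinj by auto
      show "g ` Y = ext_set X S"
      proof
        show "g ` Y \<subseteq> ext_set X S" unfolding g_def ext_set_def using fY muS by auto
        show "ext_set X S \<subseteq> g ` Y"
        proof
          fix p assume "p \<in> ext_set X S"
          then obtain x s where p: "p = (x, s)" "x \<in> X" "s \<in> S x" unfolding ext_set_def by auto
          have "g (\<nu> x s) = p" unfolding g_def using nuY[OF p(2,3)] p(1) by simp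
          then show "p \<in> g ` Y" using nuY(1)[OF p(2,3)] by blast
        qed
      qed
    qed
  qed
  show ?thesis using coc iso by blast
qed

end
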